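(* Let $A$ be a real symmetric $n\times n$ matrix with smallest eigenvalue $\bar\lambda$, $a\in\mathbb{R}^n$, $C$ a real $l\times n$ matrix, $c\in\mathbb{R}^l$, $D$ a real $m\times n$ matrix, $d\in\mathbb{R}^m$. Consider the problem $$\inf\{x^T(A-\bar\lambda I_n)x+a^Tx:\ \|x\|^2\le 1,\ \|Cx-c\|^2\le 1,\ Dx-d\le 0\},$$ and assume its feasible set is nonempty. If $$\ker(A-\bar\lambda I_n)\cap\ker(C)\cap\{v\in\mathbb{R}^n: Dv\le 0,\ a^Tv\le 0\}\ne\{0\},$$ then the problem admits a minimizer $x^*$ with $\|x^*\|=1$.
   Context: Vector inequalities such as $Dv\le 0$ are componentwise. $I_n$ is the $n\times n$ identity matrix. *)

theory Defs
  imports "HOL-Analysis.Analysis"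
begin

definition is_eigenvalue :: "real^'n^'n \<Rightarrow> real \<Rightarrow> bool" where
  "is_eigenvalue A \<mu> \<longleftrightarrow> (\<exists>v. v \<noteq> 0 \<and> A *v v = \<mu> *\<^sub>R v)"

definition is_smallest_eigenvalue :: "real^'n^'n \<Rightarrow> real \<Rightarrow> bool" where
  "is_smallest_eigenvalue A lam \<longleftrightarrow>
     is_eigenvalue A lam \<and> (\<forall>\<mu>. is_eigenvalue A \<mu> \<longrightarrow> lam \<le> \<mu>)"

end

theory Submission
  imports Defs
begin

lemma sym_dot:
  fixes B :: "real^'n^'n"
  assumes "transpose B = B"
  shows "v \<bullet> (B *v x) = (B *v v) \<bullet> x"
proof -
  have "v \<bullet> (B *v x) = (v v* B) \<bullet> x" by (simp add: dot_lmul_matrix)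
  also have "v v* B = B *v v"
    by (metis assms vector_transpose_matrix)
  finally show ?thesis .
qed

theorem corollary3p4:
  fixes A :: "real^'n^'n" and a :: "real^'n"
    and C :: "real^'n^'l" and c :: "real^'l"
    and D :: "real^'n^'m" and d :: "real^'m"
    and lam :: real
  defines "f \<equiv> (\<lambda>x. x \<bullet> ((A - lam *\<^sub>R mat 1) *v x) + a \<bullet> x)"
    and "F \<equiv> {x. norm x ^ 2 \<le> 1 \<and> norm (C *v x - c) ^ 2 \<le> 1 \<and> (\<forall>i. (D *v x - d) $ i \<le> 0)}"
  assumes symA: "transpose A = A"
    and lam: "is_smallest_eigenvalue A lam"
    and nonempty: "F \<noteq> {}"
    and cone: "{v. (A - lam *\<^sub>R mat 1) *v v = 0} \<inter> {v. C *v v = 0}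
               \<inter> {v. (\<forall>i. (D *v v) $ i \<le> 0) \<and> a \<bullet> v \<le> 0} \<noteq> {0}"
  shows "\<exists>xs\<in>F. (\<forall>x\<in>F. f xs \<le> f x) \<and> norm xs = 1"
proof -
  define B where "B = A - lam *\<^sub>R mat 1"
  have symB: "transpose B = B"
  proof -
    have "transpose B = transpose A - lam *\<^sub>R transpose (mat 1)"
      unfolding B_def transpose_def by (vector)
    then show ?thesis using symA unfolding B_def by simp
  qed
  have clF: "closed F"
  proof -
    have "F = {x. norm x ^ 2 \<le> 1} \<inter> {x. norm (C *v x - c) ^ 2 \<le> 1} \<inter> (\<Inter>i. {x. (D *v x - d) $ i \<le> 0})"
      unfolding F_def by auto
    moreover have "closed {x::real^'n. norm x ^ 2 \<le> 1}"
      by (intro closed_Collect_le continuous_intros)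
    moreover have "closed {x. norm (C *v x - c) ^ 2 \<le> 1}"
      by (intro closed_Collect_le continuous_intros linear_continuous_on matrix_vector_mul_linear)
    moreover have "closed {x. (D *v x - d) $ i \<le> 0}" for i
      by (intro closed_Collect_le continuous_intros linear_continuous_on matrix_vector_mul_linear)
    ultimately show ?thesis by (auto intro!: closed_Int closed_INT)
  qed
  have bF: "bounded F"
  proof -
    have "F \<subseteq> cball 0 1"
    proof
      fix x assume "x \<in> F"
      then have "norm x ^ 2 \<le> 1" unfolding F_def by auto
      then have "norm x \<le> 1" by (simp add: power_le_one_iff)
      then show "x \<in> cball 0 1" by simp
    qed
    then show ?thesis using bounded_cball bounded_subset by blast
  qed
  have cf: "continuous_on F f"
    unfolding f_def
    by (intro continuous_intros linear_continuous_on matrix_vector_mul_linear)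
  obtain x0 where x0: "x0 \<in> F" "\<forall>y\<in>F. f x0 \<le> f y"
    using continuous_attains_inf[OF compact_eq_bounded_closed[THEN iffD2] nonempty cf] clF bF by blast
  obtain v where v: "B *v v = 0" "C *v v = 0" "\<forall>i. (D *v v) $ i \<le> 0" "a \<bullet> v \<le> 0" "v \<noteq> 0"
  proof -
    let ?S = "{v. (A - lam *\<^sub>R mat 1) *v v = 0} \<inter> {v. C *v v = 0}
               \<inter> {v. (\<forall>i. (D *v v) $ i \<le> 0) \<and> a \<bullet> v \<le> 0}"
    have "0 \<in> ?S" by simp
    then obtain w where "w \<in> ?S" "w \<noteq> 0" using cone by blast
    then show ?thesis using that unfolding B_def by blast
  qed
  have nx0: "norm x0 \<le> 1" using x0(1) unfolding F_def by (auto simp: power_le_one_iff)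
  define g where "g t = norm (x0 + t *\<^sub>R v)" for t
  have nv: "norm v > 0" using v(5) by simp
  have "g (2 / norm v) \<ge> 1"
  proof -
    have "norm ((2 / norm v) *\<^sub>R v) = 2" using nv by simp
    moreover have "norm ((2 / norm v) *\<^sub>R v) \<le> norm (x0 + (2 / norm v) *\<^sub>R v) + norm x0"
      by (metis add_diff_cancel_left' norm_triangle_ineq4 add.commute)
    ultimately show ?thesis unfolding g_def using nx0 by linarith
  qed
  moreover have "g 0 \<le> 1" unfolding g_def using nx0 by simp
  moreover have "continuous_on {0..2 / norm v} g" unfolding g_def
    by (intro continuous_intros)
  ultimately obtain t where t: "0 \<le> t" "g t = 1"
    using IVT'[of g 0 1 "2 / norm v"] nv by force
  define xs where "xs = x0 + t *\<^sub>R v"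
  have fx: "f xs \<le> f x0"
  proof -
    have "xs \<bullet> (B *v xs) = x0 \<bullet> (B *v x0)"
      unfolding xs_def using v(1) sym_dot[OF symB, of v x0]
      by (simp add: matrix_vector_right_distrib inner_add_left inner_add_right matrix_vector_mult_scaleR)
    moreover have "a \<bullet> xs \<le> a \<bullet> x0"
      unfolding xs_def using v(4) t(1) by (simp add: inner_add_right mult_nonneg_nonpos)
    ultimately show ?thesis unfolding f_def B_def by simp
  qed
  have "xs \<in> F"
  proof -
    have "C *v xs = C *v x0" unfolding xs_def using v(2)
      by (simp add: matrix_vector_right_distrib matrix_vector_mult_scaleR)
    moreover have "(D *v xs - d) $ i \<le> 0" for i
    proof -
      have "(D *v x0 - d) $ i \<le> 0" using x0(1) unfolding F_def by auto
      moreover have "(D *v xs) $ i = (D *v x0) $ i + t * (D *v v) $ i"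
        unfolding xs_def by (simp add: matrix_vector_right_distrib matrix_vector_mult_scaleR)
      moreover have "t * (D *v v) $ i \<le> 0" using t(1) v(3) mult_nonneg_nonpos by blast
      ultimately show ?thesis by simp
    qed
    moreover have "norm xs = 1" using t unfolding g_def xs_def by simp
    ultimately show ?thesis using x0(1) unfolding F_def by auto
  qed
  moreover have "norm xs = 1" using t unfolding g_def xs_def by simp
  ultimately show ?thesis using x0(2) fx by (meson order_trans)
qed

end
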